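(* For every $n\ge1$, \[ \ell^\ast(\mathcal{B}_{(2,n)};z)=z(1+z)^{n-1}=\sum_{\substack{0<b<2^n\\ b \text{ odd}}} z^{\operatorname{supp}_2(b)}, \] where $\operatorname{supp}_2(b)$ is the number of $1$'s in the binary representation of $b$.
   Context: $\mathcal{B}_{(2,n)}:=\operatorname{conv}\bigl(e^{(1)},\ldots,e^{(n)},-\sum_{i=1}^n2^{i-1}e^{(i)}\bigr)\subset\mathbb{R}^n$, where $e^{(i)}$ are standard basis vectors. For a lattice simplex $\Delta=\operatorname{conv}(v^{(0)},\ldots,v^{(d)})\subset\mathbb{R}^n$, $\ell^\ast(\Delta;z):=\sum_{x\in\Pi^\circ_\Delta\cap\mathbb{Z}^{n+1}}z^{x_{n+1}}$, where $\Pi^\circ_\Delta:=\{\sum_{i=0}^d\lambda_i(v^{(i)},1):0<\lambda_i<1\}$. *)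

theory Defs
  imports "HOL-Computational_Algebra.Polynomial"
begin

text \<open>Points of \<open>\<int>^(n+1)\<close> / \<open>\<real>^n\<close> are represented as functions \<open>nat \<Rightarrow> int\<close>
  whose coordinates are indexed by \<open>0..n\<close> (resp. \<open>0..n-1\<close>).
  A lattice simplex \<open>conv(v 0, ..., v d)\<subseteq>\<real>^n\<close> is given by its vertex family
  \<open>v :: nat \<Rightarrow> nat \<Rightarrow> int\<close>, where \<open>v i j\<close> is the j-th coordinate (j < n) of the i-th vertex.\<close>

definition open_par_lattice :: "nat \<Rightarrow> nat \<Rightarrow> (nat \<Rightarrow> nat \<Rightarrow> int) \<Rightarrow> (nat \<Rightarrow> int) set" where
  "open_par_lattice n d v =
     {x. (\<forall>j>n. x j = 0) \<and>
         (\<exists>l :: nat \<Rightarrow> real. (\<forall>i\<le>d. 0 < l i \<and> l i < 1) \<and>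
             (\<forall>j<n. real_of_int (x j) = (\<Sum>i\<le>d. l i * real_of_int (v i j))) \<and>
             real_of_int (x n) = (\<Sum>i\<le>d. l i))}"

text \<open>\<open>\<ell>\<^sup>*(\<Delta>;z)\<close> as a polynomial in z: sum of \<open>z^(x_{n+1})\<close> over lattice points of the open
  fundamental parallelepiped (the last coordinate is index n here).\<close>
definition lstar :: "nat \<Rightarrow> nat \<Rightarrow> (nat \<Rightarrow> nat \<Rightarrow> int) \<Rightarrow> int poly" where
  "lstar n d v = (\<Sum>x\<in>open_par_lattice n d v. monom 1 (nat (x n)))"

text \<open>Vertices of \<open>\<B>_(2,n)\<close>: vertex 0 is \<open>-\<Sum> 2^(i-1) e^(i)\<close>, vertex i (1 \<le> i \<le> n) is \<open>e^(i)\<close>,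
  whose nonzero coordinate has index i-1.\<close>
definition B2_vertices :: "nat \<Rightarrow> nat \<Rightarrow> int" where
  "B2_vertices i j = (if i = 0 then - (2 ^ j) else if j = i - 1 then 1 else 0)"

fun supp2 :: "nat \<Rightarrow> nat" where
  "supp2 b = (if b = 0 then 0 else b mod 2 + supp2 (b div 2))"

declare supp2.simps[simp del]

end

theory Submission
  imports Defs
begin


lemma supp2_0[simp]: "supp2 0 = 0" by (simp add: supp2.simps)
lemma supp2_even: "supp2 (2*r) = supp2 r"
  by (subst supp2.simps) (cases "r=0", auto)
lemma supp2_odd: "supp2 (2*r+1) = Suc (supp2 r)"
  by (subst supp2.simps) auto
lemma supp2_odd'[simp]: "supp2 (Suc (2*r)) = Suc (supp2 r)"
  using supp2_odd by simp

lemma monom_S: "monom (1::'a::comm_semiring_1) (Suc k) = [:0,1:] * monom 1 k" by (simp add: monom_Suc)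

lemma sum_2N: "(\<Sum>q<2*N. f q) = (\<Sum>r<N. f (2*r) + f (2*r+1))" for f :: "nat \<Rightarrow> 'a::comm_monoid_add"
  by (induction N) (auto simp: add.assoc)

lemma sum_all: "(\<Sum>q<2^m. monom (1::'a::comm_semiring_1) (supp2 q)) = [:1,1:]^m"
proof (induction m)
  case 0 then show ?case by (simp add: supp2.simps)
next
  case (Suc m)
  have "(\<Sum>q<2^Suc m. monom (1::'a) (supp2 q)) = (\<Sum>r<2^m. monom 1 (supp2 r) + monom 1 (Suc (supp2 r)))"
    using sum_2N[of "\<lambda>q. monom (1::'a) (supp2 q)" "2^m"] by (simp add: supp2_even supp2_odd)
  also have "\<dots> = (\<Sum>r<2^m. monom 1 (supp2 r) + [:0,1:] * monom 1 (supp2 r))"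
    by (simp only: monom_S)
  also have "\<dots> = (\<Sum>r<2^m. monom 1 (supp2 r)) + [:0,1:] * (\<Sum>r<2^m. monom (1::'a) (supp2 r))"
    by (simp only: sum.distrib sum_distrib_left)
  also have "\<dots> = [:1,1:]^Suc m" using Suc.IH by simp
  finally show ?case .
qed

lemma odd_set: "n \<ge> 1 \<Longrightarrow> {b::nat. 0 < b \<and> b < 2 ^ n \<and> odd b} = (\<lambda>r. 2*r+1) ` {..<2^(n-1)}"
proof -
  assume n: "n \<ge> 1"
  then have e: "(2::nat)^n = 2 * 2^(n-1)" by (cases n) auto
  show ?thesis
  proof (rule set_eqI, rule iffI)
    fix b assume "b \<in> {b::nat. 0 < b \<and> b < 2 ^ n \<and> odd b}"
    then show "b \<in> (\<lambda>r. 2*r+1) ` {..<2^(n-1)}"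
      using e by (auto simp: image_iff elim!: oddE)
  qed (use e in auto)
qed

lemma part2: "n \<ge> 1 \<Longrightarrow> [:0, 1:] * [:1, 1:] ^ (n - 1) = (\<Sum>b\<in>{b::nat. 0 < b \<and> b < 2 ^ n \<and> odd b}. monom (1::'a::comm_semiring_1) (supp2 b))"
proof -
  assume n: "n \<ge> 1"
  have i: "inj_on (\<lambda>r::nat. 2*r+1) A" for A by (simp add: inj_on_def)
  have "(\<Sum>b\<in>{b::nat. 0 < b \<and> b < 2 ^ n \<and> odd b}. monom (1::'a) (supp2 b))
     = (\<Sum>r<2^(n-1). monom (1::'a) (supp2 (2*r+1)))"
    using n by (simp only: odd_set sum.reindex[OF i] o_def)
  also have "\<dots> = (\<Sum>r<2^(n-1). [:0,1:] * monom (1::'a) (supp2 r))"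
    by (simp only: supp2_odd monom_S)
  also have "\<dots> = [:0,1:] * [:1,1:]^(n-1)"
    by (simp only: sum_distrib_left[symmetric] sum_all)
  finally show ?thesis by simp
qed



lemma supp2_rec: "supp2 x = x mod 2 + supp2 (x div 2)"
  by (subst supp2.simps) auto

lemma supp2_mod_Suc: "supp2 (k mod 2^(Suc m)) = k mod 2 + supp2 ((k div 2) mod 2^m)"
proof -
  have a: "(k mod 2^(Suc m)) mod 2 = k mod 2"
    by (simp add: mod_mod_cancel)
  have b: "(k mod 2^(Suc m)) div 2 = (k div 2) mod 2^m"
  proof -
    have "k mod 2^(Suc m) = 2 * ((k div 2) mod 2^m) + k mod 2"
      by (simp add: mod_mult2_eq)
    then show ?thesis by simp
  qed
  show ?thesis by (subst supp2_rec) (simp only: a b)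
qed

lemma supp2_mod: "supp2 (k mod 2^(Suc n)) = supp2 (k mod 2^n) + k div 2^n mod 2"
proof (induction n arbitrary: k)
  case 0
  then show ?case by (cases "k mod 2 = 0") (auto simp: supp2.simps mod2_eq_if)
next
  case (Suc n)
  have "supp2 (k mod 2^(Suc (Suc n))) = k mod 2 + supp2 ((k div 2) mod 2^(Suc n))"
    by (rule supp2_mod_Suc)
  also have "\<dots> = k mod 2 + supp2 ((k div 2) mod 2^n) + k div 2 div 2^n mod 2"
    using Suc by simp
  also have "k mod 2 + supp2 ((k div 2) mod 2^n) = supp2 (k mod 2^Suc n)"
    by (rule supp2_mod_Suc[symmetric])
  also have "k div 2 div 2^n = k div 2^Suc n" by (simp add: div_mult2_eq)
  finally show ?case .
qed

definition S :: "nat \<Rightarrow> nat \<Rightarrow> nat" where "S n k = (\<Sum>j<n. k*2^j mod 2^n)"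

lemma S_Suc: "S (Suc n) k = k mod 2^Suc n + 2 * S n k"
proof -
  have "S (Suc n) k = k*2^0 mod 2^Suc n + (\<Sum>j<n. k*2^Suc j mod 2^Suc n)"
    unfolding S_def by (rule sum.lessThan_Suc_shift)
  also have "(\<Sum>j<n. k*2^Suc j mod 2^Suc n) = (\<Sum>j<n. 2 * (k*2^j mod 2^n))"
  proof (rule sum.cong)
    fix j assume "j \<in> {..<n}"
    have "k*2^Suc j = 2 * (k*2^j)" by simp
    moreover have "(2::nat)^Suc n = 2 * 2^n" by simp
    ultimately show "k*2^Suc j mod 2^Suc n = 2 * (k*2^j mod 2^n)"
      by (simp only: mod_mult_mult1)
  qed simp
  finally show ?thesis by (simp add: S_def sum_distrib_left)
qed

lemma S_main: "k mod 2^n + S n k = 2^n * supp2 (k mod 2^n)"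
proof (induction n arbitrary: k)
  case 0 then show ?case by (simp add: S_def)
next
  case (Suc n)
  have m: "k mod 2^Suc n = k mod 2^n + 2^n * (k div 2^n mod 2)"
    by (metis mod_mult2_eq power_Suc2 add.commute)
  have "k mod 2^Suc n + S (Suc n) k = 2 * (k mod 2^n + S n k) + 2^Suc n * (k div 2^n mod 2)"
    using m by (simp add: S_Suc)
  also have "\<dots> = 2^Suc n * (supp2 (k mod 2^n) + k div 2^n mod 2)"
    using Suc.IH[of k] by (simp add: algebra_simps)
  also have "\<dots> = 2^Suc n * supp2 (k mod 2^Suc n)"
    by (simp only: supp2_mod)
  finally show ?case .
qed

lemma geo_nat: "(\<Sum>j<n. (2::nat)^j) + 1 = 2^n"
  by (induction n) auto

lemma ident: assumes "k < 2^n"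
  shows "int (supp2 k) = int k - (\<Sum>j<n. int (k*2^j div 2^n))"
proof -
  have e1: "k + S n k = 2^n * supp2 k" using S_main[of k n] assms by simp
  have e2: "int k * 2^j = 2^n * int (k*2^j div 2^n) + int (k*2^j mod 2^n)" for j
  proof -
    have "k*2^j = 2^n * (k*2^j div 2^n) + k*2^j mod 2^n" by simp
    then have "int (k*2^j) = int (2^n * (k*2^j div 2^n) + k*2^j mod 2^n)" by (rule arg_cong)
    then show ?thesis by (simp only: of_nat_add of_nat_mult of_nat_power of_nat_numeral)
  qed
  have "int k * (\<Sum>j<n. 2^j) = (\<Sum>j<n. int k * 2^j)" by (simp add: sum_distrib_left)
  also have "\<dots> = (\<Sum>j<n. 2^n * int (k*2^j div 2^n) + int (k*2^j mod 2^n))"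
    by (rule sum.cong) (auto simp only: e2)
  also have "\<dots> = 2^n * (\<Sum>j<n. int (k*2^j div 2^n)) + int (S n k)"
    unfolding S_def by (simp only: sum.distrib sum_distrib_left of_nat_sum)
  finally have e3: "int k * (\<Sum>j<n. 2^j) = 2^n * (\<Sum>j<n. int (k*2^j div 2^n)) + int (S n k)" .
  have g: "(\<Sum>j<n. (2::int)^j) = 2^n - 1"
    by (induction n) auto
  have "(2::int)^n * int (supp2 k) = int k + int (S n k)"
    using arg_cong[OF e1, of int] by simp
  also have "\<dots> = 2^n * (int k - (\<Sum>j<n. int (k*2^j div 2^n)))"
    using e3 g by (simp add: algebra_simps)
  finally show ?thesis by simp
qed



lemma sumB: assumes "j < n"
  shows "(\<Sum>i\<le>n. l i * real_of_int (B2_vertices i j)) = - l 0 * 2^j + l (Suc j)"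
proof -
  have "(\<Sum>i\<le>n. l i * real_of_int (B2_vertices i j)) = l 0 * real_of_int (B2_vertices 0 j) + (\<Sum>i<n. l (Suc i) * real_of_int (B2_vertices (Suc i) j))"
    by (rule sum.atMost_shift)
  also have "(\<Sum>i<n. l (Suc i) * real_of_int (B2_vertices (Suc i) j)) = (\<Sum>i<n. if i = j then l (Suc i) else 0)"
    by (rule sum.cong) (auto simp: B2_vertices_def)
  also have "\<dots> = l (Suc j)" using assms by (simp add: sum.delta')
  finally show ?thesis by (simp add: B2_vertices_def)
qed

lemma suml: "(\<Sum>i\<le>n. l i) = l 0 + (\<Sum>j<n. l (Suc j))"
  by (rule sum.atMost_shift)

lemma geo_real: "(\<Sum>j<n. (2::real)^j) = 2^n - 1"
  by (induction n) auto

lemma mod_nz: assumes "odd k" "j < n" shows "k*2^j mod 2^n \<noteq> (0::nat)"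
proof
  assume "k*2^j mod 2^n = 0"
  then have "2^n dvd k*2^j" by (simp add: dvd_eq_mod_eq_0)
  moreover have "(2::nat)^n = 2^j * 2^(n-j)" using assms(2)
    by (simp add: power_add[symmetric])
  ultimately have "2^j * 2^(n-j) dvd k*2^j" by simp
  then have "2^(n-j) dvd k" by (simp add: mult.commute)
  moreover have "(2::nat) dvd 2^(n-j)" using assms(2) by simp
  ultimately show False using assms(1) dvd_trans by blast
qed

definition F :: "nat \<Rightarrow> nat \<Rightarrow> nat \<Rightarrow> int" where
  "F n k = (\<lambda>j. if j < n then - int (k*2^j div 2^n) else if j = n then int (supp2 k) else 0)"

lemma in_set: assumes "odd k" "k < 2^n"
  shows "F n k \<in> open_par_lattice n n B2_vertices"
proof -
  define l where "l = (\<lambda>i. if i = 0 then real k / 2^n else real (k*2^(i-1)) / 2^n - real (k*2^(i-1) div 2^n))"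
  have dm: "real k * 2^j = 2^n * real (k*2^j div 2^n) + real (k*2^j mod 2^n)" for j
  proof -
    have "k*2^j = 2^n * (k*2^j div 2^n) + k*2^j mod 2^n" by simp
    then have "real (k*2^j) = real (2^n * (k*2^j div 2^n) + k*2^j mod 2^n)" by (rule arg_cong)
    then show ?thesis by (simp only: of_nat_add of_nat_mult of_nat_power of_nat_numeral)
  qed
  have lS: "l (Suc j) = real (k*2^j mod 2^n) / 2^n" for j
    unfolding l_def using dm[of j] by (simp add: field_simps)
  have b: "0 < l i \<and> l i < 1" if "i \<le> n" for i
  proof (cases i)
    case 0
    have "0 < k" using assms(1) by (rule odd_pos)
    moreover have "real k < 2^n" using assms(2)
      by (metis of_nat_less_iff of_nat_numeral of_nat_power)
    ultimately show ?thesis using 0 by (simp add: l_def field_simps)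
  next
    case (Suc j)
    then have "j < n" using that by simp
    then have "k*2^j mod 2^n \<noteq> 0" using mod_nz assms by blast
    moreover have "k*2^j mod 2^n < 2^n" by simp
    ultimately have r1: "0 < real (k*2^j mod 2^n)" and r2: "real (k*2^j mod 2^n) < 2^n"
      by (simp, metis of_nat_less_iff of_nat_numeral of_nat_power)
    have "0 < l (Suc j)" unfolding lS using r1 by simp
    moreover have "l (Suc j) < 1" unfolding lS using r2 by simp
    ultimately show ?thesis using Suc by simp
  qed
  have c: "real_of_int (F n k j) = (\<Sum>i\<le>n. l i * real_of_int (B2_vertices i j))" if "j < n" for j
    unfolding sumB[OF that] using that by (simp add: F_def l_def field_simps)
  have "(\<Sum>i\<le>n. l i) = real k / 2^n + (\<Sum>j<n. real k * 2^j / 2^n - real (k*2^j div 2^n))"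
    by (simp add: suml l_def)
  also have "\<dots> = real k / 2^n + real k * (\<Sum>j<n. 2^j) / 2^n - (\<Sum>j<n. real (k*2^j div 2^n))"
    by (simp add: sum_subtractf sum_distrib_left sum_divide_distrib)
  also have "\<dots> = real k - (\<Sum>j<n. real (k*2^j div 2^n))"
    by (simp add: geo_real field_simps)
  also have "\<dots> = real_of_int (F n k n)"
    using arg_cong[OF ident[OF assms(2)], of real_of_int] by (simp add: F_def)
  finally have d: "real_of_int (F n k n) = (\<Sum>i\<le>n. l i)" by simp
  show ?thesis unfolding open_par_lattice_def
    using b c d by (auto simp: F_def intro!: exI[of _ l])
qed



lemma div_char: fixes a b M :: int assumes "0 < a*M + b" "a*M + b < M"
  shows "b div M = -a"
proof -
  have M: "M > 0" using assms by linarith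
  have "b = M * (-a) + (a*M + b)" by (simp add: algebra_simps)
  then have "b div M = (M * (-a) + (a*M + b)) div M" by simp
  also have "\<dots> = -a + (a*M + b) div M" using M by simp
  also have "(a*M + b) div M = 0" using assms by (simp add: div_pos_pos_trivial)
  finally show ?thesis by simp
qed

lemma from_set: assumes "x \<in> open_par_lattice n n B2_vertices" "n \<ge> 1"
  shows "\<exists>k. odd k \<and> k < 2^n \<and> x = F n k"
proof -
  obtain l :: "nat \<Rightarrow> real" where xz: "\<forall>j>n. x j = 0" and lb: "\<forall>i\<le>n. 0 < l i \<and> l i < 1"
    and lc: "\<forall>j<n. real_of_int (x j) = (\<Sum>i\<le>n. l i * real_of_int (B2_vertices i j))"
    and ln: "real_of_int (x n) = (\<Sum>i\<le>n. l i)"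
    using assms(1) unfolding open_par_lattice_def by blast
  have cj: "l (Suc j) = real_of_int (x j) + l 0 * 2^j" if "j < n" for j
    using lc that sumB[OF that, of l] by simp
  have "real_of_int (x n) = l 0 + (\<Sum>j<n. real_of_int (x j) + l 0 * 2^j)"
    unfolding ln suml by (simp add: cj)
  also have "\<dots> = l 0 * 2^n + (\<Sum>j<n. real_of_int (x j))"
    by (simp add: sum.distrib sum_distrib_left[symmetric] geo_real algebra_simps)
  finally have xn: "real_of_int (x n) = l 0 * 2^n + (\<Sum>j<n. real_of_int (x j))" .
  define K where "K = x n - (\<Sum>j<n. x j)"
  have tK: "l 0 * 2^n = real_of_int K" unfolding K_def using xn by simp
  have l0: "0 < l 0" "l 0 < 1" using lb by auto
  have "0 < l 0 * 2^n" using l0 by simp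
  then have "0 < real_of_int K" using tK by simp
  then have Kp: "0 < K" by simp
  have "l 0 * 2^n < 1 * (2::real)^n" by (rule mult_strict_right_mono) (simp_all add: l0)
  then have "real_of_int K < 2^n" using tK by simp
  then have "real_of_int K < real_of_int (2^n)" by simp
  then have Kl: "K < 2^n" by (simp only: of_int_less_iff)
  define k where "k = nat K"
  have Kk: "K = int k" using Kp k_def by simp
  have bnd: "0 < x j * 2^n + K * 2^j \<and> x j * 2^n + K * 2^j < 2^n" if "j < n" for j
  proof -
    have "0 < l (Suc j)" "l (Suc j) < 1" using lb that by auto
    then have "0 < (real_of_int (x j) + l 0 * 2^j) * 2^n" "(real_of_int (x j) + l 0 * 2^j) * 2^n < 2^n"
      using cj[OF that] by simp_all
    moreover have "(real_of_int (x j) + l 0 * 2^j) * 2^n = real_of_int (x j * 2^n + K * 2^j)"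
      using tK by (simp add: algebra_simps)
    ultimately have "0 < real_of_int (x j * 2^n + K * 2^j)" "real_of_int (x j * 2^n + K * 2^j) < 2^n"
      by simp_all
    then have "real_of_int 0 < real_of_int (x j * 2^n + K * 2^j)" "real_of_int (x j * 2^n + K * 2^j) < real_of_int (2^n)"
      by simp_all
    then show ?thesis by (simp only: of_int_less_iff)
  qed
  have xj: "x j = - int (k*2^j div 2^n)" if "j < n" for j
  proof -
    have "K * 2^j div 2^n = - x j" using bnd[OF that] by (intro div_char) simp_all
    moreover have "int (k*2^j div 2^n) = K * 2^j div 2^n" using Kk by (simp add: zdiv_int)
    ultimately show ?thesis by simp
  qed
  have kodd: "odd k"
  proof
    assume "even k"
    then obtain m' where "k = 2 * m'" by (rule evenE)
    then have m: "K = 2 * int m'" using Kk by simp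
    define m where "m = int m'"
    have m: "K = 2 * m" using m m_def by simp
    have n1: "n - 1 < n" using assms(2) by simp
    have p: "(2::int)^n = 2 * 2^(n-1)" using assms(2) by (cases n) auto
    have "K * 2^(n-1) = m * 2^n" using m p by simp
    then have "0 < (x (n-1) + m) * 2^n" "(x (n-1) + m) * 2^n < 1 * 2^n"
      using bnd[OF n1] by (simp_all add: algebra_simps)
    then have "0 < x (n-1) + m" "x (n-1) + m < 1"
       apply -
       apply (simp add: zero_less_mult_iff)
      apply (erule mult_right_less_imp_less)
      apply simp
      done
    then show False by simp
  qed
  have "int k < int (2^n)" using Kl Kk by simp
  then have kl: "k < 2^n" by (simp only: of_nat_less_iff)
  have "x n = K + (\<Sum>j<n. x j)" unfolding K_def by simp
  also have "(\<Sum>j<n. x j) = (\<Sum>j<n. - int (k*2^j div 2^n))" by (rule sum.cong) (simp_all add: xj)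
  also have "K + \<dots> = int (supp2 k)" using ident[OF kl] Kk by (simp add: sum_negf)
  finally have xn': "x n = int (supp2 k)" .
  have "x = F n k"
  proof
    fix j show "x j = F n k j"
      using xj xn' xz by (cases "j < n"; cases "j = n") (auto simp: F_def)
  qed
  then show ?thesis using kodd kl by blast
qed


lemma set_eq: assumes "n \<ge> 1"
  shows "open_par_lattice n n B2_vertices = F n ` {k. 0 < k \<and> k < 2 ^ n \<and> odd k}"
proof
  show "open_par_lattice n n B2_vertices \<subseteq> F n ` {k. 0 < k \<and> k < 2 ^ n \<and> odd k}"
  proof
    fix x assume "x \<in> open_par_lattice n n B2_vertices"
    then obtain k where "odd k" "k < 2^n" "x = F n k" using from_set assms by blast
    then show "x \<in> F n ` {k. 0 < k \<and> k < 2 ^ n \<and> odd k}" using odd_pos by blast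
  qed
qed (auto intro: in_set)

lemma F_inj: assumes "n \<ge> 1" shows "inj_on (F n) {k. 0 < k \<and> k < 2 ^ n \<and> odd k}"
proof (rule inj_onI)
  fix a b assume a: "a \<in> {k. 0 < k \<and> k < 2 ^ n \<and> odd k}" and b: "b \<in> {k. 0 < k \<and> k < 2 ^ n \<and> odd k}"
    and e: "F n a = F n b"
  have n1: "n - 1 < n" using assms by simp
  have p: "(2::nat)^n = 2^(n-1) * 2" using assms by (cases n) auto
  have "F n a (n-1) = F n b (n-1)" using e by simp
  then have "a*2^(n-1) div 2^n = b*2^(n-1) div 2^n" using n1 by (simp add: F_def)
  then have "a div 2 = b div 2" unfolding p by (simp add: div_mult2_eq)
  moreover have "odd a" "odd b" using a b by auto
  ultimately show "a = b" by (metis odd_two_times_div_two_succ)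
qed

theorem mainTheorem10:
  fixes n :: nat
  assumes "n \<ge> 1"
  shows "lstar n n B2_vertices = [:0, 1:] * [:1, 1:] ^ (n - 1)
       \<and> [:0, 1:] * [:1, 1:] ^ (n - 1) = (\<Sum>b\<in>{b::nat. 0 < b \<and> b < 2 ^ n \<and> odd b}. monom 1 (supp2 b))"
proof -
  have "lstar n n B2_vertices = (\<Sum>k\<in>{k. 0 < k \<and> k < 2 ^ n \<and> odd k}. monom 1 (nat (F n k n)))"
    unfolding lstar_def set_eq[OF assms] by (simp add: sum.reindex[OF F_inj[OF assms]])
  also have "\<dots> = (\<Sum>b\<in>{b::nat. 0 < b \<and> b < 2 ^ n \<and> odd b}. monom 1 (supp2 b))"
    by (simp add: F_def)
  finally have L: "lstar n n B2_vertices = (\<Sum>b\<in>{b::nat. 0 < b \<and> b < 2 ^ n \<and> odd b}. monom 1 (supp2 b))" .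
  show ?thesis
  proof (rule conjI)
    show "lstar n n B2_vertices = [:0, 1:] * [:1, 1:] ^ (n - 1)"
      unfolding L by (rule part2[OF assms, symmetric])
  next
    show "[:0, 1:] * [:1, 1:] ^ (n - 1) = (\<Sum>b\<in>{b::nat. 0 < b \<and> b < 2 ^ n \<and> odd b}. monom 1 (supp2 b))"
      by (rule part2[OF assms])
  qed
qed

end
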